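(* Let $f:\mathbb{R}^n\to\mathbb{R}$ be bounded below and continuously differentiable with $\nabla f$ Lipschitz with constant $L_{\nabla f}$. Let $x\in\mathbb{R}^n$, $\Delta>0$, points $y_1,\ldots,y_p$ with $\|y_i-x\|\le\beta\Delta$ for some $\beta>0$ and all $i$, with $\hat F$ invertible, and let $m$ be the minimum Frobenius norm quadratic interpolation model of $f$ and $\ell_1,\ldots,\ell_p$ the associated minimum Frobenius norm Lagrange polynomials (see context). Suppose $\max_{y\in B(x,\Delta)}\sum_i|\ell_i(y)|\le\Lambda_1$ and $\max_{y\in B(x,\Delta)}\max_i|\ell_i(y)|\le\Lambda_\infty$. Then for all $y\in B(x,\Delta)$, $|m(y)-f(y)|\le\kappa_{\mathrm{mf}}\Delta^2$ and $\|\nabla m(y)-\nabla f(y)\|\le\kappa_{\mathrm{mg}}\Delta$, where $$\kappa_{\mathrm{mf}}=\frac{L_{\nabla f}+\kappa_H}{2}\beta^2\Lambda_1+\frac{L_{\nabla f}+\kappa_H}{2},\qquad\kappa_{\mathrm{mg}}=2\kappa_{\mathrm{mf}}+2\kappa_H,\qquad \kappa_H:=12L_{\nabla f}p\beta^2\Lambda_\infty.$$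
   Context: Here $n+2\le p\le(n+1)(n+2)/2-1$. Let $\hat s_i=(y_i-x)/\Delta$, $\hat M$ with rows $[1,\hat s_i^T]$, $\hat P_{ij}=\tfrac12(\hat s_i^T\hat s_j)^2$, $\hat F=\begin{bmatrix}\hat P&\hat M\\ \hat M^T&0\end{bmatrix}$. For data values $v_1,\ldots,v_p$, the minimum Frobenius norm interpolant is the quadratic $q(y)=c+g^T(y-x)+\tfrac12(y-x)^TH(y-x)$ with $H$ symmetric minimizing $\tfrac14\|H\|_F^2$ subject to $q(y_i)=v_i$ for all $i$; when $\hat F$ is invertible it is unique and obtained by solving $\hat F[\hat\lambda;c;\Delta g]=[v;0;0_n]$ and setting $H=\sum_i(\hat\lambda_i/\Delta^4)(y_i-x)(y_i-x)^T$. The model $m$ uses $v_i=f(y_i)$; the Lagrange polynomial $\ell_i$ uses $v_j=\delta_{ij}$. $B(x,\Delta)=\{y:\|y-x\|\le\Delta\}$. *)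

theory Defs
  imports "HOL-Analysis.Analysis"
begin

text \<open>Quadratic models around a base point x are triples (c, g, H) representing
  q(y) = c + g^T (y - x) + 1/2 (y - x)^T H (y - x).\<close>

type_synonym 'n quadmodel = "real \<times> (real^'n) \<times> ((real^'n)^'n)"

definition qeval :: "real^'n \<Rightarrow> 'n quadmodel \<Rightarrow> real^'n \<Rightarrow> real" where
  "qeval x q y = (case q of (c, g, H) \<Rightarrow>
      c + g \<bullet> (y - x) + (1/2) * ((y - x) \<bullet> (H *v (y - x))))"

text \<open>Gradient of the quadratic (H is symmetric for the models considered).\<close>
definition qgrad :: "real^'n \<Rightarrow> 'n quadmodel \<Rightarrow> real^'n \<Rightarrow> real^'n" where
  "qgrad x q y = (case q of (c, g, H) \<Rightarrow> g + H *v (y - x))"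

definition frob_sq :: "real^'n^'n \<Rightarrow> real" where
  "frob_sq H = (\<Sum>i\<in>UNIV. \<Sum>j\<in>UNIV. (H $ i $ j)^2)"

definition mfn_interp :: "real^'n \<Rightarrow> ('p \<Rightarrow> real^'n) \<Rightarrow> ('p \<Rightarrow> real) \<Rightarrow> 'n quadmodel \<Rightarrow> bool" where
  "mfn_interp x y v q \<longleftrightarrow>
     (case q of (c, g, H) \<Rightarrow>
        transpose H = H \<and> (\<forall>i. qeval x q (y i) = v i) \<and>
        (\<forall>c' g' H'. transpose H' = H' \<and> (\<forall>i. qeval x (c', g', H') (y i) = v i)
            \<longrightarrow> (1/4) * frob_sq H \<le> (1/4) * frob_sq H'))"

text \<open>The matrix Fhat = [[Phat, Mhat],[Mhat^T, 0]], rows/columns indexed by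
  'p (the points) + (unit (constant term) + 'n (coordinates)).\<close>
definition Fhat :: "real^'n \<Rightarrow> real \<Rightarrow> ('p::finite \<Rightarrow> real^'n)
     \<Rightarrow> real^('p + (unit + 'n))^('p + (unit + 'n))" where
  "Fhat x \<Delta> y = (let s = (\<lambda>i. (1/\<Delta>) *\<^sub>R (y i - x)) in
     (\<chi> r c. (case (r, c) of
        (Inl i, Inl j) \<Rightarrow> (1/2) * (s i \<bullet> s j)^2
      | (Inl i, Inr (Inl _)) \<Rightarrow> 1
      | (Inl i, Inr (Inr k)) \<Rightarrow> s i $ k
      | (Inr (Inl _), Inl j) \<Rightarrow> 1
      | (Inr (Inr k), Inl j) \<Rightarrow> s j $ k
      | _ \<Rightarrow> 0)))"

end

theory Submission imports Defs begin

lemma qeval_split: "qeval x (c, g, H) z = c + g \<bullet> (z - x) + (1/2) * ((z - x) \<bullet> (H *v (z - x)))"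
  by (simp add: qeval_def)

lemma qeval_alt: "qeval x q z = fst q + fst (snd q) \<bullet> (z - x) + (1/2) * ((z - x) \<bullet> (snd (snd q) *v (z - x)))"
  by (cases q) (simp add: qeval_def)

lemma qeval_add: "qeval x (a + b) z = qeval x a z + qeval x b z"
proof -
  define d where "d = z - x"
  show ?thesis unfolding qeval_alt d_def[symmetric]
    by (simp add: matrix_vector_mult_add_rdistrib inner_add_left inner_add_right distrib_left)
qed

lemma qeval_scaleR: "qeval x (r *\<^sub>R a) z = r * qeval x a z"
proof -
  define d where "d = z - x"
  show ?thesis unfolding qeval_alt d_def[symmetric]
    by (simp add: scaleR_matrix_vector_assoc[symmetric] distrib_left)
qed

lemma qeval_zero: "qeval x 0 z = 0"
  by (simp add: qeval_def zero_prod_def)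

lemma qeval_sum: "finite S \<Longrightarrow> qeval x (sum F S) z = (\<Sum>i\<in>S. qeval x (F i) z)"
  by (induction S rule: finite_induct) (auto simp: qeval_zero qeval_add)

lemma qgrad_split: "qgrad x (c, g, H) z = g + H *v (z - x)"
  by (simp add: qgrad_def)

lemma qgrad_alt: "qgrad x q z = fst (snd q) + snd (snd q) *v (z - x)"
  by (cases q) (simp add: qgrad_def)

lemma qgrad_add: "qgrad x (a + b) z = qgrad x a z + qgrad x b z"
proof -
  define d where "d = z - x"
  show ?thesis unfolding qgrad_alt d_def[symmetric]
    by (simp add: matrix_vector_mult_add_rdistrib)
qed

lemma qgrad_scaleR: "qgrad x (r *\<^sub>R a) z = r *\<^sub>R qgrad x a z"
proof -
  define d where "d = z - x"
  show ?thesis unfolding qgrad_alt d_def[symmetric]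
    by (simp add: scaleR_matrix_vector_assoc[symmetric] scaleR_right_distrib)
qed

lemma qgrad_zero: "qgrad x 0 z = 0"
  by (simp add: qgrad_def zero_prod_def)

lemma qgrad_sum: "finite S \<Longrightarrow> qgrad x (sum F S) z = (\<Sum>i\<in>S. qgrad x (F i) z)"
  by (induction S rule: finite_induct) (auto simp: qgrad_zero qgrad_add)

definition fip :: "real^'n^'n \<Rightarrow> real^'n^'n \<Rightarrow> real" where
  "fip A B = (\<Sum>i\<in>UNIV. \<Sum>j\<in>UNIV. A $ i $ j * B $ i $ j)"

lemma frob_add: "frob_sq (A + B) = frob_sq A + 2 * fip A B + frob_sq B"
  by (simp add: frob_sq_def fip_def power2_eq_square algebra_simps sum.distrib sum_distrib_left)

lemma frob_scale: "frob_sq (t *\<^sub>R B) = t^2 * frob_sq B"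
  by (simp add: frob_sq_def power2_eq_square algebra_simps sum_distrib_left)

lemma fip_scale: "fip A (t *\<^sub>R B) = t * fip A B"
  by (simp add: fip_def algebra_simps sum_distrib_left)

lemma frob_nonneg: "frob_sq A \<ge> 0"
  by (simp add: frob_sq_def sum_nonneg)

lemma frob_zero: "frob_sq A \<le> 0 \<Longrightarrow> A = 0"
proof -
  assume "frob_sq A \<le> 0"
  then have "(\<Sum>i\<in>UNIV. \<Sum>j\<in>UNIV. (A $ i $ j)^2) = 0"
    using frob_nonneg[of A] by (simp add: frob_sq_def)
  then have "\<forall>i. (\<Sum>j\<in>UNIV. (A $ i $ j)^2) = 0"
    by (subst (asm) sum_nonneg_eq_0_iff) (auto intro: sum_nonneg)
  then have "\<forall>i j. (A $ i $ j)^2 = 0"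
    by (simp add: sum_nonneg_eq_0_iff)
  then show "A = 0" by (simp add: vec_eq_iff)
qed

lemma fip_sum: "finite S \<Longrightarrow> fip (sum F S) B = (\<Sum>k\<in>S. fip (F k) B)"
  by (simp add: fip_def sum_component sum_distrib_right sum.swap[of _ S])

lemma sym_iff: "transpose H = H \<longleftrightarrow> (\<forall>i j. H $ i $ j = H $ j $ i)"
  by (auto simp: transpose_def vec_eq_iff)


lemma sum_UNIV_plus:
  "sum g (UNIV :: ('a::finite + 'b::finite) set) = sum (g \<circ> Inl) UNIV + sum (g \<circ> Inr) UNIV"
  by (metis UNIV_Plus_UNIV finite sum.Plus)

lemma invertible_kernel:
  fixes A :: "real^'m^'m"
  assumes "invertible A" "A *v w = 0" shows "w = 0"
proof -
  from assms(1) obtain A' where "A' ** A = mat 1" by (auto simp: invertible_def)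
  then have "w = A' *v (A *v w)" by (simp add: matrix_vector_mul_assoc)
  then show ?thesis using assms(2) by simp
qed

lemma fhat_inj:
  fixes x :: "real^'n" and y :: "'p::finite \<Rightarrow> real^'n"
  assumes Finv: "invertible (Fhat x \<Delta> y)" and D: "\<Delta> > 0"
    and h: "\<And>i. c + g \<bullet> (y i - x) = 0"
  shows "c = 0 \<and> g = 0"
proof -
  define w :: "real^('p + (unit + 'n))" where
    "w = (\<chi> r. case r of Inl _ \<Rightarrow> 0 | Inr (Inl _) \<Rightarrow> c | Inr (Inr k) \<Rightarrow> \<Delta> * g $ k)"
  have "Fhat x \<Delta> y *v w = 0"
  proof (rule iffD2[OF vec_eq_iff], rule allI)
    fix r :: "'p + (unit + 'n)"
    show "(Fhat x \<Delta> y *v w) $ r = 0 $ r"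
    proof (cases r)
      case (Inl i)
      have "(Fhat x \<Delta> y *v w) $ r = c + (\<Sum>k\<in>UNIV. (1/\<Delta>) * (y i - x) $ k * (\<Delta> * g $ k))"
        using Inl by (simp add: matrix_vector_mult_def Fhat_def w_def sum_UNIV_plus)
      also have "\<dots> = c + g \<bullet> (y i - x)"
        using D by (simp add: inner_vec_def mult.commute)
      finally show ?thesis using h[of i] by simp
    next
      case (Inr r')
      then show ?thesis
        by (cases r') (simp_all add: matrix_vector_mult_def Fhat_def w_def sum_UNIV_plus)
    qed
  qed
  then have "w = 0" using Finv invertible_kernel by blast
  then have "\<And>r. w $ r = 0" by simp
  from this[of "Inr (Inl ())"] have "c = 0" by (simp add: w_def)
  moreover have "g = 0"
  proof (rule iffD2[OF vec_eq_iff], rule allI)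
    fix k show "g $ k = 0 $ k" using \<open>\<And>r. w $ r = 0\<close>[of "Inr (Inr k)"] D by (simp add: w_def)
  qed
  ultimately show ?thesis by simp
qed

lemma mfn_orth:
  assumes q: "mfn_interp x y v q"
    and Ds: "transpose (snd (snd D)) = snd (snd D)" and Dz: "\<And>i. qeval x D (y i) = 0"
  shows "fip (snd (snd q)) (snd (snd D)) = 0"
proof -
  obtain c g H where qd: "q = (c, g, H)" by (cases q) auto
  obtain c' g' H' where Dd: "D = (c', g', H')" by (cases D) auto
  have Hs: "transpose H = H" and qi: "\<And>i. qeval x q (y i) = v i"
    and mn: "\<And>c2 g2 H2. transpose H2 = H2 \<Longrightarrow> (\<forall>i. qeval x (c2, g2, H2) (y i) = v i)
            \<Longrightarrow> (1/4) * frob_sq H \<le> (1/4) * frob_sq H2"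
    using q unfolding mfn_interp_def qd by auto
  define a where "a = fip H H'"
  define b where "b = frob_sq H'"
  have key: "0 \<le> 2 * t * a + t^2 * b" for t
  proof -
    have "transpose (H + t *\<^sub>R H') = H + t *\<^sub>R H'"
      using Hs Ds unfolding Dd sym_iff by simp
    moreover have "\<forall>i. qeval x (c + t * c', g + t *\<^sub>R g', H + t *\<^sub>R H') (y i) = v i"
    proof
      fix i
      have "(c + t * c', g + t *\<^sub>R g', H + t *\<^sub>R H') = q + t *\<^sub>R D" by (simp add: qd Dd)
      then show "qeval x (c + t * c', g + t *\<^sub>R g', H + t *\<^sub>R H') (y i) = v i"
        using qi[of i] Dz[of i] by (simp add: qeval_add qeval_scaleR)
    qed
    ultimately have "(1/4) * frob_sq H \<le> (1/4) * frob_sq (H + t *\<^sub>R H')"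
      by (rule mn)
    then have "frob_sq H \<le> frob_sq (H + t *\<^sub>R H')" by simp
    then show ?thesis by (simp add: frob_add frob_scale fip_scale a_def b_def)
  qed
  have b0: "b \<ge> 0" by (simp add: b_def frob_nonneg)
  define s where "s = a / (b + 1)"
  have as: "a = s * (b + 1)" using b0 by (simp add: s_def)
  have "0 \<le> 2 * (-s) * a + (-s)^2 * b" by (rule key)
  also have "2 * (-s) * a + (-s)^2 * b = -(s^2 * (b + 2))"
    unfolding as by (simp add: power2_eq_square algebra_simps)
  finally have h1: "s^2 * (b + 2) \<le> 0" by simp
  have h2: "s^2 * (b + 2) \<ge> 0" using b0 by simp
  from h1 h2 have "s^2 * (b + 2) = 0" by (rule antisym)
  then have "s = 0" using b0 by simp
  then have "a = 0" using as by simp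
  then show ?thesis by (simp add: qd Dd a_def)
qed


lemma fip_scale_left: "fip (t *\<^sub>R A) B = t * fip A B"
  by (simp add: fip_def algebra_simps sum_distrib_left)

lemma qeval_diff: "qeval x (a - b) z = qeval x a z - qeval x b z"
  using qeval_add[of x "a - b" b z] by simp

lemma mfn_unique:
  fixes x :: "real^'n" and y :: "'p::finite \<Rightarrow> real^'n"
  assumes Finv: "invertible (Fhat x \<Delta> y)" and D: "\<Delta> > 0"
    and q1s: "transpose (snd (snd q1)) = snd (snd q1)"
    and q1i: "\<And>i. qeval x q1 (y i) = v i"
    and orth: "\<And>E. transpose (snd (snd E)) = snd (snd E) \<Longrightarrow> (\<forall>i. qeval x E (y i) = 0)
                 \<Longrightarrow> fip (snd (snd q1)) (snd (snd E)) = 0"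
    and q2: "mfn_interp x y v q2"
  shows "q2 = q1"
proof -
  obtain c1 g1 H1 where q1d: "q1 = (c1, g1, H1)" by (cases q1) auto
  obtain c2 g2 H2 where q2d: "q2 = (c2, g2, H2)" by (cases q2) auto
  have H2s: "transpose H2 = H2" and q2i: "\<And>i. qeval x q2 (y i) = v i"
    and mn: "\<And>c' g' H'. transpose H' = H' \<Longrightarrow> (\<forall>i. qeval x (c', g', H') (y i) = v i)
            \<Longrightarrow> (1/4) * frob_sq H2 \<le> (1/4) * frob_sq H'"
    using q2 unfolding mfn_interp_def q2d by auto
  have "frob_sq H2 \<le> frob_sq H1" using mn[of H1 c1 g1] q1s q1i by (simp add: q1d)
  define E where "E = q2 - q1"
  have Es: "transpose (snd (snd E)) = snd (snd E)"
    using H2s q1s unfolding E_def q1d q2d sym_iff by simp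
  have Ez: "\<forall>i. qeval x E (y i) = 0" using q1i q2i by (simp add: E_def qeval_diff)
  have "fip H1 (H2 - H1) = 0" using orth[OF Es Ez] by (simp add: E_def q1d q2d)
  moreover have "H2 = H1 + (H2 - H1)" by simp
  ultimately have "frob_sq H2 = frob_sq H1 + frob_sq (H2 - H1)"
    by (metis frob_add mult_zero_right add_0_right)
  with \<open>frob_sq H2 \<le> frob_sq H1\<close> have "frob_sq (H2 - H1) \<le> 0" by simp
  then have HH: "H2 = H1" using frob_zero by fastforce
  have "\<And>i. (c2 - c1) + (g2 - g1) \<bullet> (y i - x) = 0"
  proof -
    fix i
    have "qeval x E (y i) = 0" using Ez by simp
    then show "(c2 - c1) + (g2 - g1) \<bullet> (y i - x) = 0"
      by (simp add: E_def q1d q2d HH qeval_def)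
  qed
  from fhat_inj[OF Finv D this] HH show ?thesis by (simp add: q1d q2d)
qed

lemma lagr_comb:
  fixes x :: "real^'n" and y :: "'p::finite \<Rightarrow> real^'n"
  assumes Finv: "invertible (Fhat x \<Delta> y)" and D: "\<Delta> > 0"
    and lagr: "\<And>i. mfn_interp x y (\<lambda>j. if i = j then 1 else 0) (ell i)"
    and q: "mfn_interp x y a q"
  shows "q = (\<Sum>i\<in>UNIV. a i *\<^sub>R ell i)"
proof (rule mfn_unique[OF Finv D _ _ _ q])
  have ls: "transpose (snd (snd (ell i))) = snd (snd (ell i))" for i
    using lagr[of i] unfolding mfn_interp_def by (cases "ell i") auto
  have li: "qeval x (ell i) (y j) = (if i = j then 1 else 0)" for i j
    using lagr[of i] unfolding mfn_interp_def by (cases "ell i") auto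
  show "transpose (snd (snd (\<Sum>i\<in>UNIV. a i *\<^sub>R ell i))) = snd (snd (\<Sum>i\<in>UNIV. a i *\<^sub>R ell i))"
    using ls unfolding sym_iff by (simp add: snd_sum sum_component)
  show "qeval x (\<Sum>i\<in>UNIV. a i *\<^sub>R ell i) (y j) = a j" for j
    by (simp add: qeval_sum qeval_scaleR li if_distrib cong: if_cong)
  show "fip (snd (snd (\<Sum>i\<in>UNIV. a i *\<^sub>R ell i))) (snd (snd E)) = 0"
    if "transpose (snd (snd E)) = snd (snd E)" "\<forall>i. qeval x E (y i) = 0" for E
  proof -
    have "\<And>i. fip (snd (snd (ell i))) (snd (snd E)) = 0"
      using mfn_orth[OF lagr that(1)] that(2) by blast
    then show ?thesis by (simp add: snd_sum fip_sum fip_scale_left)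
  qed
qed

lemma affine_comb:
  fixes x :: "real^'n" and y :: "'p::finite \<Rightarrow> real^'n"
  assumes Finv: "invertible (Fhat x \<Delta> y)" and D: "\<Delta> > 0"
    and lagr: "\<And>i. mfn_interp x y (\<lambda>j. if i = j then 1 else 0) (ell i)"
  shows "(c0, g0, 0) = (\<Sum>i\<in>UNIV. (c0 + g0 \<bullet> (y i - x)) *\<^sub>R ell i)"
proof (rule lagr_comb[OF Finv D lagr])
  show "mfn_interp x y (\<lambda>i. c0 + g0 \<bullet> (y i - x)) (c0, g0, 0)"
    unfolding mfn_interp_def by (simp add: qeval_def frob_sq_def sum_nonneg sym_iff)
qed

lemma sym_inner:
  fixes H :: "real^'n^'n"
  assumes "transpose H = H"
  shows "v \<bullet> (H *v w) = (H *v v) \<bullet> w"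
proof -
  have "v \<bullet> (H *v w) = (v v* H) \<bullet> w" by (simp add: dot_lmul_matrix)
  also have "v v* H = H *v v" by (metis assms vector_transpose_matrix)
  finally show ?thesis .
qed

lemma taylor_lip:
  fixes f :: "real^'n \<Rightarrow> real" and grad :: "real^'n \<Rightarrow> real^'n"
  assumes deriv: "\<And>z. (f has_derivative (\<lambda>h. grad z \<bullet> h)) (at z)"
    and lip: "L-lipschitz_on UNIV grad"
  shows "\<bar>f b - f a - grad a \<bullet> (b - a)\<bar> \<le> L / 2 * (norm (b - a))^2"
proof -
  define d where "d = b - a"
  have L0: "L \<ge> 0" using lip lipschitz_on_nonneg by blast
  have phi: "((\<lambda>t. f (a + t *\<^sub>R d)) has_real_derivative (grad (a + t *\<^sub>R d) \<bullet> d)) (at t)" for t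
  proof -
    have "((\<lambda>t. a + t *\<^sub>R d) has_derivative (\<lambda>h. h *\<^sub>R d)) (at t)"
      by (auto intro!: derivative_eq_intros)
    from has_derivative_compose[OF this deriv]
    have "((\<lambda>t. f (a + t *\<^sub>R d)) has_derivative (\<lambda>h. grad (a + t *\<^sub>R d) \<bullet> (h *\<^sub>R d))) (at t)" .
    moreover have "(\<lambda>h. grad (a + t *\<^sub>R d) \<bullet> (h *\<^sub>R d)) = (*) (grad (a + t *\<^sub>R d) \<bullet> d)"
      by (auto simp: mult.commute)
    ultimately show ?thesis by (simp add: has_field_derivative_def)
  qed
  have gb: "\<bar>(grad (a + t *\<^sub>R d) - grad a) \<bullet> d\<bar> \<le> L * t * (norm d)^2" if "t \<ge> 0" for t
  proof -
    have "\<bar>(grad (a + t *\<^sub>R d) - grad a) \<bullet> d\<bar> \<le> norm (grad (a + t *\<^sub>R d) - grad a) * norm d"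
      by (rule Cauchy_Schwarz_ineq2)
    also have "norm (grad (a + t *\<^sub>R d) - grad a) \<le> L * norm (t *\<^sub>R d)"
      using lipschitz_onD[OF lip, of "a + t *\<^sub>R d" a] by (simp add: dist_norm)
    then have "norm (grad (a + t *\<^sub>R d) - grad a) * norm d \<le> L * norm (t *\<^sub>R d) * norm d"
      by (simp add: mult_right_mono)
    also have "\<dots> = L * t * (norm d)^2" using that by (simp add: power2_eq_square)
    finally show ?thesis .
  qed
  have up: "f (a + 1 *\<^sub>R d) - 1 * (grad a \<bullet> d) - L/2 * 1^2 * (norm d)^2
      \<le> f (a + 0 *\<^sub>R d) - 0 * (grad a \<bullet> d) - L/2 * 0^2 * (norm d)^2"
  proof (rule deriv_nonpos_imp_antimono[where g = "\<lambda>t. f (a + t *\<^sub>R d) - t * (grad a \<bullet> d) - L/2 * t^2 * (norm d)^2"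
        and g' = "\<lambda>t. grad (a + t *\<^sub>R d) \<bullet> d - grad a \<bullet> d - L * t * (norm d)^2"])
    fix t :: real assume "t \<in> {0..1}"
    show "((\<lambda>t. f (a + t *\<^sub>R d) - t * (grad a \<bullet> d) - L/2 * t^2 * (norm d)^2) has_real_derivative
        (grad (a + t *\<^sub>R d) \<bullet> d - grad a \<bullet> d - L * t * (norm d)^2)) (at t)"
      by (rule phi derivative_eq_intros refl | simp)+
    show "grad (a + t *\<^sub>R d) \<bullet> d - grad a \<bullet> d - L * t * (norm d)^2 \<le> 0"
      using gb[of t] \<open>t \<in> {0..1}\<close> by (simp add: inner_diff_left)
  qed simp
  have lo: "f (a + 0 *\<^sub>R d) - 0 * (grad a \<bullet> d) + L/2 * 0^2 * (norm d)^2
      \<le> f (a + 1 *\<^sub>R d) - 1 * (grad a \<bullet> d) + L/2 * 1^2 * (norm d)^2"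
  proof (rule deriv_nonneg_imp_mono[where g = "\<lambda>t. f (a + t *\<^sub>R d) - t * (grad a \<bullet> d) + L/2 * t^2 * (norm d)^2"
        and g' = "\<lambda>t. grad (a + t *\<^sub>R d) \<bullet> d - grad a \<bullet> d + L * t * (norm d)^2"])
    fix t :: real assume "t \<in> {0..1}"
    show "((\<lambda>t. f (a + t *\<^sub>R d) - t * (grad a \<bullet> d) + L/2 * t^2 * (norm d)^2) has_real_derivative
        (grad (a + t *\<^sub>R d) \<bullet> d - grad a \<bullet> d + L * t * (norm d)^2)) (at t)"
      by (rule phi derivative_eq_intros refl | simp)+
    show "grad (a + t *\<^sub>R d) \<bullet> d - grad a \<bullet> d + L * t * (norm d)^2 \<ge> 0"
      using gb[of t] \<open>t \<in> {0..1}\<close> by (simp add: inner_diff_left)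
  qed simp
  from up lo have "f b - f a - grad a \<bullet> d \<le> L/2*(norm d)^2" "-(L/2*(norm d)^2) \<le> f b - f a - grad a \<bullet> d"
    by (simp_all add: d_def)
  then have "\<bar>f b - f a - grad a \<bullet> d\<bar> \<le> L / 2 * (norm d)^2" by (intro abs_leI) linarith+
  then show ?thesis by (simp add: d_def)
qed


lemma half_diff_bound:
  fixes A B G L :: real
  assumes "G = (A - B) / 2" "\<bar>A\<bar> \<le> L" "\<bar>B\<bar> \<le> L"
  shows "\<bar>G\<bar> \<le> L"
  using assms by (simp add: abs_le_iff)

lemma quad_grad_bound:
  fixes x :: "real^'n"
  assumes Hs: "transpose H = H" and D: "\<Delta> > 0"
    and bnd: "\<And>w. w \<in> cball x \<Delta> \<Longrightarrow> \<bar>qeval x (c, g, H) w\<bar> \<le> \<Lambda>"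
    and z: "z \<in> cball x \<Delta>"
  shows "norm (qgrad x (c, g, H) z) \<le> 9 * \<Lambda> / \<Delta>"
proof -
  have ev: "qeval x (c, g, H) (x + p) = c + g \<bullet> p + 1/2 * (p \<bullet> (H *v p))" for p
    by (simp add: qeval_def)
  have neg: "H *v (-p) = -(H *v p)" for p
    using matrix_vector_mult_diff_distrib[of H 0 p] by simp
  have evm: "qeval x (c, g, H) (x - p) = c - g \<bullet> p + 1/2 * (p \<bullet> (H *v p))" for p
    by (simp add: qeval_def neg)
  have inb: "x + p \<in> cball x \<Delta>" "x - p \<in> cball x \<Delta>" if "norm p \<le> \<Delta>" for p
    using that by (auto simp: dist_norm)
  have x0: "\<bar>c\<bar> \<le> \<Lambda>" using bnd[of x] D ev[of 0] by simp
  have quad: "\<bar>p \<bullet> (H *v p)\<bar> \<le> 4 * \<Lambda>" if "norm p \<le> \<Delta>" for p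
  proof -
    have "p \<bullet> (H *v p) = qeval x (c, g, H) (x + p) + qeval x (c, g, H) (x - p) - 2 * c"
      by (simp add: ev evm)
    then show ?thesis using bnd[OF inb(1)[OF that]] bnd[OF inb(2)[OF that]] x0 by linarith
  qed
  have lin: "\<bar>g \<bullet> p\<bar> \<le> \<Lambda>" if "norm p \<le> \<Delta>" for p
  proof -
    have "g \<bullet> p = (qeval x (c, g, H) (x + p) - qeval x (c, g, H) (x - p)) / 2"
      by (simp add: ev evm)
    then show ?thesis using half_diff_bound bnd[OF inb(1)[OF that]] bnd[OF inb(2)[OF that]] by blast
  qed
  have bil: "\<bar>(H *v v) \<bullet> w\<bar> \<le> 8 * \<Lambda>" if "norm v \<le> \<Delta>" "norm w \<le> \<Delta>" for v w
  proof -
    define P where "P = (1/2) *\<^sub>R (v + w)"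
    define Q where "Q = (1/2) *\<^sub>R (v - w)"
    have nP: "norm P \<le> \<Delta>"
    proof -
      have "norm P = norm (v + w) / 2" unfolding P_def by simp
      then show ?thesis using that norm_triangle_ineq[of v w] by linarith
    qed
    have nQ: "norm Q \<le> \<Delta>"
    proof -
      have "norm Q = norm (v - w) / 2" unfolding Q_def by simp
      then show ?thesis using that norm_triangle_ineq4[of v w] by linarith
    qed
    have "P \<bullet> (H *v P) - Q \<bullet> (H *v Q) = (1/2) * (v \<bullet> (H *v w) + w \<bullet> (H *v v))"
    proof -
      define a where "a = v \<bullet> (H *v v)"
      define b where "b = v \<bullet> (H *v w)"
      define c' where "c' = w \<bullet> (H *v v)"
      define e where "e = w \<bullet> (H *v w)"
      have sc: "((1/2) *\<^sub>R u) \<bullet> (H *v ((1/2) *\<^sub>R u)) = (1/4) * (u \<bullet> (H *v u))" for u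
        by (simp only: matrix_vector_mult_scaleR inner_scaleR_left inner_scaleR_right)
      have e1: "(v + w) \<bullet> (H *v (v + w)) = a + b + c' + e"
        unfolding a_def b_def c'_def e_def
        by (simp only: matrix_vector_right_distrib inner_add_left inner_add_right)
      have e2: "(v - w) \<bullet> (H *v (v - w)) = a - b - c' + e"
        unfolding a_def b_def c'_def e_def
        by (simp only: matrix_vector_mult_diff_distrib inner_diff_left inner_diff_right)
      show ?thesis unfolding P_def Q_def sc e1 e2 b_def[symmetric] c'_def[symmetric]
        by (simp add: field_simps)
    qed
    also have "v \<bullet> (H *v w) = (H *v v) \<bullet> w" by (rule sym_inner[OF Hs])
    also have "w \<bullet> (H *v v) = (H *v v) \<bullet> w" by (simp add: inner_commute)
    finally have "(H *v v) \<bullet> w = P \<bullet> (H *v P) - Q \<bullet> (H *v Q)" by simp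
    then show ?thesis using quad[OF nP] quad[OF nQ] by linarith
  qed
  define G where "G = g + H *v (z - x)"
  have G: "qgrad x (c, g, H) z = G" by (simp add: qgrad_def G_def)
  have nzx: "norm (z - x) \<le> \<Delta>" using z by (simp add: dist_norm norm_minus_commute)
  show ?thesis
  proof (cases "G = 0")
    case True then show ?thesis using G x0 D by simp
  next
    case False
    then have nG: "norm G > 0" by simp
    define u where "u = (\<Delta> / norm G) *\<^sub>R G"
    have nu: "norm u = \<Delta>" using nG D by (simp add: u_def)
    have "G \<bullet> u = \<Delta> * norm G"
      using nG by (simp add: u_def inner_scaleR_right dot_square_norm power2_eq_square)
    also have "G \<bullet> u = g \<bullet> u + (H *v (z - x)) \<bullet> u" by (simp add: G_def inner_add_left)
    finally have "\<Delta> * norm G \<le> 9 * \<Lambda>"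
      using lin[of u] bil[OF nzx, of u] nu by linarith
    then show ?thesis using G D by (simp add: field_simps)
  qed
qed


theorem theorem6p8:
  fixes f :: "real^'n \<Rightarrow> real" and grad :: "real^'n \<Rightarrow> real^'n"
    and L :: real and x :: "real^'n" and \<Delta> \<beta> \<Lambda>1 \<Lambda>inf :: real
    and y :: "'p::finite \<Rightarrow> real^'n"
    and m :: "'n quadmodel" and ell :: "'p \<Rightarrow> 'n quadmodel"
  assumes p_lower: "CARD('n) + 2 \<le> CARD('p)"
    and p_upper: "CARD('p) \<le> (CARD('n) + 1) * (CARD('n) + 2) div 2 - 1"
    and bdd: "bdd_below (range f)"
    and deriv: "\<And>z. (f has_derivative (\<lambda>h. grad z \<bullet> h)) (at z)"
    and grad_cont: "continuous_on UNIV grad"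
    and lip: "L-lipschitz_on UNIV grad"
    and Delta_pos: "\<Delta> > 0" and beta_pos: "\<beta> > 0"
    and pts: "\<And>i. norm (y i - x) \<le> \<beta> * \<Delta>"
    and Finv: "invertible (Fhat x \<Delta> y)"
    and model: "mfn_interp x y (\<lambda>i. f (y i)) m"
    and lagr: "\<And>i. mfn_interp x y (\<lambda>j. if i = j then 1 else 0) (ell i)"
    and Lam1: "\<And>z. z \<in> cball x \<Delta> \<Longrightarrow> (\<Sum>i\<in>UNIV. \<bar>qeval x (ell i) z\<bar>) \<le> \<Lambda>1"
    and Laminf: "\<And>z i. z \<in> cball x \<Delta> \<Longrightarrow> \<bar>qeval x (ell i) z\<bar> \<le> \<Lambda>inf"
  shows "let \<kappa>H = 12 * L * real CARD('p) * \<beta>^2 * \<Lambda>inf;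
             \<kappa>mf = (L + \<kappa>H) / 2 * \<beta>^2 * \<Lambda>1 + (L + \<kappa>H) / 2;
             \<kappa>mg = 2 * \<kappa>mf + 2 * \<kappa>H
         in \<forall>z \<in> cball x \<Delta>. \<bar>qeval x m z - f z\<bar> \<le> \<kappa>mf * \<Delta>^2 \<and>
                            norm (qgrad x m z - grad z) \<le> \<kappa>mg * \<Delta>"
proof -
  define \<kappa>H where "\<kappa>H = 12 * L * real CARD('p) * \<beta>^2 * \<Lambda>inf"
  define \<kappa>mf where "\<kappa>mf = (L + \<kappa>H) / 2 * \<beta>^2 * \<Lambda>1 + (L + \<kappa>H) / 2"
  define \<kappa>mg where "\<kappa>mg = 2 * \<kappa>mf + 2 * \<kappa>H"
  have L0: "L \<ge> 0" using lip lipschitz_on_nonneg by blast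
  have xin: "x \<in> cball x \<Delta>" using Delta_pos by simp
  have Li0: "\<Lambda>inf \<ge> 0" using Laminf[OF xin] by (meson abs_ge_zero order_trans)
  have L10: "\<Lambda>1 \<ge> 0" using Lam1[OF xin] by (meson order_trans sum_nonneg abs_ge_zero)
  have kH0: "\<kappa>H \<ge> 0" unfolding \<kappa>H_def using L0 Li0 by simp
  define r where "r i = f (y i) - f x - grad x \<bullet> (y i - x)" for i
  have rb: "\<bar>r i\<bar> \<le> L / 2 * (\<beta> * \<Delta>)^2" for i
  proof -
    have "\<bar>r i\<bar> \<le> L / 2 * (norm (y i - x))^2" unfolding r_def by (rule taylor_lip[OF deriv lip])
    also have "\<dots> \<le> L / 2 * (\<beta> * \<Delta>)^2"
      using pts[of i] L0 by (intro mult_left_mono power_mono) auto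
    finally show ?thesis .
  qed
  have m1: "m = (\<Sum>i\<in>UNIV. f (y i) *\<^sub>R ell i)"
    by (rule lagr_comb[OF Finv Delta_pos lagr model])
  have m2: "(f x, grad x, 0) = (\<Sum>i\<in>UNIV. (f x + grad x \<bullet> (y i - x)) *\<^sub>R ell i)"
    by (rule affine_comb[OF Finv Delta_pos lagr])
  have mdec: "m = (f x, grad x, 0) + (\<Sum>i\<in>UNIV. r i *\<^sub>R ell i)"
  proof -
    have fe: "(\<lambda>i. f (y i) *\<^sub>R ell i) = (\<lambda>i. (f x + grad x \<bullet> (y i - x)) *\<^sub>R ell i + r i *\<^sub>R ell i)"
    proof (rule ext)
      fix i
      have "f (y i) = (f x + grad x \<bullet> (y i - x)) + r i" by (simp add: r_def)
      then show "f (y i) *\<^sub>R ell i = (f x + grad x \<bullet> (y i - x)) *\<^sub>R ell i + r i *\<^sub>R ell i"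
        by (metis scaleR_left_distrib)
    qed
    have "m = (\<Sum>i\<in>UNIV. (f x + grad x \<bullet> (y i - x)) *\<^sub>R ell i + r i *\<^sub>R ell i)"
      unfolding m1 by (rule arg_cong[where f="\<lambda>h. sum h UNIV", OF fe])
    also have "\<dots> = (\<Sum>i\<in>UNIV. (f x + grad x \<bullet> (y i - x)) *\<^sub>R ell i) + (\<Sum>i\<in>UNIV. r i *\<^sub>R ell i)"
      by (rule sum.distrib)
    finally show ?thesis using m2 by simp
  qed
  have lsym: "transpose (snd (snd (ell i))) = snd (snd (ell i))" for i
    using lagr[of i] unfolding mfn_interp_def by (cases "ell i") auto
  have gradl: "norm (qgrad x (ell i) z) \<le> 9 * \<Lambda>inf / \<Delta>" if "z \<in> cball x \<Delta>" for i z
  proof -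
    obtain c g H where e: "ell i = (c, g, H)" by (cases "ell i") auto
    show ?thesis unfolding e
      by (rule quad_grad_bound[OF _ Delta_pos _ that]) (use lsym[of i] Laminf[of _ i] e in auto)
  qed
  show ?thesis unfolding Let_def \<kappa>H_def[symmetric] \<kappa>mf_def[symmetric] \<kappa>mg_def[symmetric]
  proof (intro ballI conjI)
    fix z assume z: "z \<in> cball x \<Delta>"
    have nzx: "norm (z - x) \<le> \<Delta>" using z by (simp add: dist_norm norm_minus_commute)
    have ev: "qeval x m z = (f x + grad x \<bullet> (z - x)) + (\<Sum>i\<in>UNIV. r i * qeval x (ell i) z)"
      unfolding mdec by (simp add: qeval_add qeval_sum qeval_scaleR qeval_split)
    have t1: "\<bar>f x + grad x \<bullet> (z - x) - f z\<bar> \<le> L / 2 * \<Delta>^2"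
    proof -
      have "\<bar>f z - f x - grad x \<bullet> (z - x)\<bar> \<le> L / 2 * (norm (z - x))^2" by (rule taylor_lip[OF deriv lip])
      also have "\<dots> \<le> L / 2 * \<Delta>^2" using nzx L0 by (intro mult_left_mono power_mono) auto
      finally have "\<bar>f z - f x - grad x \<bullet> (z - x)\<bar> \<le> L / 2 * \<Delta>^2" .
      moreover have "\<bar>f x + grad x \<bullet> (z - x) - f z\<bar> = \<bar>f z - f x - grad x \<bullet> (z - x)\<bar>"
        by (metis abs_minus_commute diff_diff_eq)
      ultimately show ?thesis by simp
    qed
    have t2: "\<bar>\<Sum>i\<in>UNIV. r i * qeval x (ell i) z\<bar> \<le> L / 2 * (\<beta> * \<Delta>)^2 * \<Lambda>1"
    proof -
      have "\<bar>\<Sum>i\<in>UNIV. r i * qeval x (ell i) z\<bar> \<le> (\<Sum>i\<in>UNIV. \<bar>r i\<bar> * \<bar>qeval x (ell i) z\<bar>)"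
        by (metis (no_types, lifting) abs_mult sum.cong sum_abs)
      also have "\<dots> \<le> (\<Sum>i\<in>UNIV. L / 2 * (\<beta> * \<Delta>)^2 * \<bar>qeval x (ell i) z\<bar>)"
        by (intro sum_mono mult_right_mono rb) simp
      also have "\<dots> = L / 2 * (\<beta> * \<Delta>)^2 * (\<Sum>i\<in>UNIV. \<bar>qeval x (ell i) z\<bar>)"
        by (simp add: sum_distrib_left)
      also have "\<dots> \<le> L / 2 * (\<beta> * \<Delta>)^2 * \<Lambda>1"
        using Lam1[OF z] L0 by (intro mult_left_mono) auto
      finally show ?thesis .
    qed
    have "\<bar>qeval x m z - f z\<bar> \<le> L / 2 * \<Delta>^2 + L / 2 * (\<beta> * \<Delta>)^2 * \<Lambda>1"
    proof -
      have "qeval x m z - f z = (f x + grad x \<bullet> (z - x) - f z) + (\<Sum>i\<in>UNIV. r i * qeval x (ell i) z)"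
        unfolding ev by simp
      then have "\<bar>qeval x m z - f z\<bar> \<le> \<bar>f x + grad x \<bullet> (z - x) - f z\<bar> + \<bar>\<Sum>i\<in>UNIV. r i * qeval x (ell i) z\<bar>"
        by (simp only: abs_triangle_ineq)
      also have "\<dots> \<le> L / 2 * \<Delta>^2 + L / 2 * (\<beta> * \<Delta>)^2 * \<Lambda>1"
        using t1 t2 by (rule add_mono)
      finally show ?thesis .
    qed
    also have "\<dots> = (L / 2 * \<beta>^2 * \<Lambda>1 + L / 2) * \<Delta>^2" by (simp add: algebra_simps power_mult_distrib)
    also have "\<dots> \<le> \<kappa>mf * \<Delta>^2"
    proof (rule mult_right_mono)
      have "L / 2 * \<beta>^2 * \<Lambda>1 \<le> (L + \<kappa>H) / 2 * \<beta>^2 * \<Lambda>1"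
        using kH0 L10 by (intro mult_right_mono) (auto simp: divide_right_mono)
      moreover have "L / 2 \<le> (L + \<kappa>H) / 2" using kH0 by simp
      ultimately show "L / 2 * \<beta>^2 * \<Lambda>1 + L / 2 \<le> \<kappa>mf" unfolding \<kappa>mf_def by (rule add_mono)
    qed simp
    finally show "\<bar>qeval x m z - f z\<bar> \<le> \<kappa>mf * \<Delta>^2" .
    have eg: "qgrad x m z = grad x + (\<Sum>i\<in>UNIV. r i *\<^sub>R qgrad x (ell i) z)"
      unfolding mdec by (simp add: qgrad_add qgrad_sum qgrad_scaleR qgrad_split)
    have g1: "norm (grad x - grad z) \<le> L * \<Delta>"
    proof -
      have "norm (grad x - grad z) \<le> L * norm (x - z)"
        using lipschitz_onD[OF lip, of x z] by (simp add: dist_norm)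
      also have "\<dots> \<le> L * \<Delta>" using nzx L0 by (intro mult_left_mono) (auto simp: norm_minus_commute)
      finally show ?thesis .
    qed
    have g2: "norm (\<Sum>i\<in>UNIV. r i *\<^sub>R qgrad x (ell i) z) \<le> real CARD('p) * (L / 2 * (\<beta> * \<Delta>)^2 * (9 * \<Lambda>inf / \<Delta>))"
    proof -
      have "norm (\<Sum>i\<in>UNIV. r i *\<^sub>R qgrad x (ell i) z) \<le> (\<Sum>i\<in>UNIV. norm (r i *\<^sub>R qgrad x (ell i) z))"
        by (rule norm_sum)
      also have "\<dots> \<le> (\<Sum>i\<in>(UNIV::'p set). L / 2 * (\<beta> * \<Delta>)^2 * (9 * \<Lambda>inf / \<Delta>))"
      proof (rule sum_mono)
        fix i :: 'p
        have "norm (r i *\<^sub>R qgrad x (ell i) z) = \<bar>r i\<bar> * norm (qgrad x (ell i) z)" by simp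
        also have "\<dots> \<le> L / 2 * (\<beta> * \<Delta>)^2 * (9 * \<Lambda>inf / \<Delta>)"
          by (intro mult_mono rb gradl[OF z]) (auto simp: L0)
        finally show "norm (r i *\<^sub>R qgrad x (ell i) z) \<le> L / 2 * (\<beta> * \<Delta>)^2 * (9 * \<Lambda>inf / \<Delta>)" .
      qed
      also have "\<dots> = real CARD('p) * (L / 2 * (\<beta> * \<Delta>)^2 * (9 * \<Lambda>inf / \<Delta>))"
        by simp
      finally show ?thesis .
    qed
    have "norm (qgrad x m z - grad z) \<le> norm (grad x - grad z) + norm (\<Sum>i\<in>UNIV. r i *\<^sub>R qgrad x (ell i) z)"
    proof -
      have eqg: "qgrad x m z - grad z = (grad x - grad z) + (\<Sum>i\<in>UNIV. r i *\<^sub>R qgrad x (ell i) z)"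
        unfolding eg by simp
      show ?thesis unfolding eqg by (rule norm_triangle_ineq)
    qed
    also have "\<dots> \<le> L * \<Delta> + real CARD('p) * (L / 2 * (\<beta> * \<Delta>)^2 * (9 * \<Lambda>inf / \<Delta>))"
      using g1 g2 by (rule add_mono)
    also have "\<dots> = (L + 3 / 8 * \<kappa>H) * \<Delta>"
    proof -
      have hh: "L / 2 * (\<beta> * \<Delta>)^2 * (9 * \<Lambda>inf / \<Delta>) = 9/2 * L * \<beta>^2 * \<Lambda>inf * \<Delta>"
        using Delta_pos by (simp add: field_simps power2_eq_square)
      show ?thesis unfolding \<kappa>H_def hh by (simp add: algebra_simps)
    qed
    also have "\<dots> \<le> \<kappa>mg * \<Delta>"
    proof (rule mult_right_mono)
      have "(L + \<kappa>H) / 2 * \<beta>^2 * \<Lambda>1 \<ge> 0" using L0 kH0 L10 by simp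
      then have "\<kappa>mf \<ge> (L + \<kappa>H) / 2" unfolding \<kappa>mf_def by (metis le_add_same_cancel2)
      then have "2 * \<kappa>mf \<ge> L + \<kappa>H" by (simp add: field_simps)
      then show "L + 3 / 8 * \<kappa>H \<le> \<kappa>mg" unfolding \<kappa>mg_def using kH0 by linarith
    qed (use Delta_pos in simp)
    finally show "norm (qgrad x m z - grad z) \<le> \<kappa>mg * \<Delta>" .
  qed
qed

end
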